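(* Consider the directed square lattice on $\{1,\dots,n\}^2$ with random nonzero vertex weights $w_u$ and random nonzero edge weights $w_{u,v}$, and let $X_u=\log|w_u|$, $X_e=\log|w_e|$. Suppose there is $t>0$ and $M<\infty$ such that $\mathbb{E}e^{-tX_u},\mathbb{E}e^{tX_u}\le M$ for all vertices $u$ and all $n$, and likewise for edges. Define modified weights by $w'_{u,v}=w_{u,v}\,w_v$ for each edge $(u,v)$ and $w'_u=1$ for each vertex $u$, and let $Z^{(k)\prime}_{S,T}$ be the quantity $Z^{(k)}_{S,T}$ computed with the modified weights. Then for any $k\geq1$, $\delta>0$ and all $S,T$, \[ \mathbb{P}\left(n^{-1/3}\left|\log|Z^{(k)}_{S,T}|-\log|Z^{(k)\prime}_{S,T}|\right|>\delta\right)\to 0 \quad (n\to\infty). \]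
   Context: The directed square lattice has vertex set $\{1,\dots,n\}^2$ and directed edges $(i,j)\to(i+1,j)$, $(i,j)\to(i,j+1)$. A path $\pi=(u_1\to\dots\to u_m)$ (length zero allowed) has weight $\mathrm{wt}(\pi)=\prod_{i=1}^{m-1}w_{u_i,u_{i+1}}\prod_{i=1}^m w_{u_i}$. For sequences $S=(u_1,\dots,u_k)$, $T=(v_1,\dots,v_k)$ of distinct vertices, $Z^{(k)}_{S,T}=\sum_\pi \mathrm{sgn}(\sigma(\pi))\prod_{i=1}^k\mathrm{wt}(\pi_i)$, summed over $k$-tuples of pairwise vertex-disjoint paths with $\pi_i$ from $u_i$ to $v_{\sigma(i)}$ for a permutation $\sigma=\sigma(\pi)$. Edge weights need not be independent, only independent along every path. *)

theory Defs
  imports "HOL-Probability.Probability" "HOL-Combinatorics.Permutations"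
begin

type_synonym vtx = "nat \<times> nat"

definition lattice_vertices :: "nat \<Rightarrow> vtx set" where
  "lattice_vertices n = {1..n} \<times> {1..n}"

definition lattice_edge :: "nat \<Rightarrow> vtx \<Rightarrow> vtx \<Rightarrow> bool" where
  "lattice_edge n u v \<longleftrightarrow> u \<in> lattice_vertices n \<and> v \<in> lattice_vertices n \<and>
     (v = (fst u + 1, snd u) \<or> v = (fst u, snd u + 1))"

definition lattice_path :: "nat \<Rightarrow> vtx list \<Rightarrow> bool" where
  "lattice_path n p \<longleftrightarrow> p \<noteq> [] \<and> set p \<subseteq> lattice_vertices n \<and>
     (\<forall>i. Suc i < length p \<longrightarrow> lattice_edge n (p ! i) (p ! Suc i))"

definition path_wt :: "(vtx \<Rightarrow> real) \<Rightarrow> (vtx \<Rightarrow> vtx \<Rightarrow> real) \<Rightarrow> vtx list \<Rightarrow> real" where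
  "path_wt wv we p = (\<Prod>i<length p - 1. we (p ! i) (p ! Suc i)) * (\<Prod>i<length p. wv (p ! i))"

definition Zk :: "nat \<Rightarrow> (vtx \<Rightarrow> real) \<Rightarrow> (vtx \<Rightarrow> vtx \<Rightarrow> real) \<Rightarrow> vtx list \<Rightarrow> vtx list \<Rightarrow> real" where
  "Zk n wv we S T =
     (\<Sum>\<sigma> \<in> {\<sigma>. \<sigma> permutes {..<length S}}. of_int (sign \<sigma>) *
        (\<Sum>ps \<in> {ps. length ps = length S \<and>
                   (\<forall>i<length S. lattice_path n (ps ! i) \<and> hd (ps ! i) = S ! i \<and>
                                  last (ps ! i) = T ! (\<sigma> i)) \<and>
                   (\<forall>i<length S. \<forall>j<length S. i \<noteq> j \<longrightarrow> set (ps ! i) \<inter> set (ps ! j) = {})}.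
           \<Prod>i<length S. path_wt wv we (ps ! i)))"

end

theory Submission
  imports Defs
begin

lemma tail_half:
  fixes M :: "'a measure" and f :: "'a \<Rightarrow> real"
  assumes P: "prob_space M" and fm: "f \<in> borel_measurable M" and t: "t > 0"
    and I: "(\<integral>\<^sup>+ x. ennreal (exp (t * f x)) \<partial>M) \<le> ennreal C"
  shows "measure M {x\<in>space M. f x \<ge> a} \<le> exp (-t*a) * max C 0"
proof -
  interpret prob_space M by (rule P)
  have "emeasure M {x\<in>space M. f x \<ge> a} \<le>
           ennreal (exp (-t * a)) * nn_integral M (\<lambda>x. ennreal (exp (t * f x)) * indicator (space M) x)"
    by (rule Chernoff_ineq_nn_integral_ge) (use t fm in auto)
  also have "nn_integral M (\<lambda>x. ennreal (exp (t * f x)) * indicator (space M) x)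
     = (\<integral>\<^sup>+ x. ennreal (exp (t * f x)) \<partial>M)"
    by (rule nn_integral_cong) (simp add: indicator_def)
  also have "ennreal (exp (-t * a)) * (\<integral>\<^sup>+ x. ennreal (exp (t * f x)) \<partial>M) \<le> ennreal (exp (-t * a)) * ennreal C"
    by (intro mult_left_mono I) auto
  also have "ennreal C = ennreal (max C 0)" by (cases "C \<ge> 0") (auto simp: ennreal_neg)
  also have "ennreal (exp (-t * a)) * ennreal (max C 0) = ennreal (exp (-t*a) * max C 0)"
    by (simp add: ennreal_mult)
  finally show ?thesis
    by (simp add: emeasure_eq_measure ennreal_le_iff)
qed

lemma tail:
  fixes M :: "'a measure" and X :: "'a \<Rightarrow> real"
  assumes P: "prob_space M" and Xm: "X \<in> borel_measurable M" and t: "t > 0"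
    and I1: "(\<integral>\<^sup>+ x. ennreal (exp (- t * ln \<bar>X x\<bar>)) \<partial>M) \<le> ennreal C"
    and I2: "(\<integral>\<^sup>+ x. ennreal (exp (t * ln \<bar>X x\<bar>)) \<partial>M) \<le> ennreal C"
  shows "measure M {x\<in>space M. a < \<bar>ln \<bar>X x\<bar>\<bar>} \<le> 2 * exp (-t*a) * max C 0"
proof -
  interpret prob_space M by (rule P)
  have fm: "(\<lambda>x. ln \<bar>X x\<bar>) \<in> borel_measurable M" using Xm by measurable
  have fm2: "(\<lambda>x. - ln \<bar>X x\<bar>) \<in> borel_measurable M" using Xm by measurable
  have A: "measure M {x\<in>space M. ln \<bar>X x\<bar> \<ge> a} \<le> exp (-t*a) * max C 0"
    by (rule tail_half[OF P fm t I2])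
  have B: "measure M {x\<in>space M. - ln \<bar>X x\<bar> \<ge> a} \<le> exp (-t*a) * max C 0"
    by (rule tail_half[OF P fm2 t]) (use I1 in simp)
  have "{x\<in>space M. a < \<bar>ln \<bar>X x\<bar>\<bar>} \<subseteq> {x\<in>space M. ln \<bar>X x\<bar> \<ge> a} \<union> {x\<in>space M. - ln \<bar>X x\<bar> \<ge> a}"
    by auto
  hence "measure M {x\<in>space M. a < \<bar>ln \<bar>X x\<bar>\<bar>} \<le> measure M ({x\<in>space M. ln \<bar>X x\<bar> \<ge> a} \<union> {x\<in>space M. - ln \<bar>X x\<bar> \<ge> a})"
    by (intro finite_measure_mono) (use fm fm2 in measurable)
  also have "\<dots> \<le> measure M {x\<in>space M. ln \<bar>X x\<bar> \<ge> a} + measure M {x\<in>space M. - ln \<bar>X x\<bar> \<ge> a}"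
    by (intro measure_Un_le) (use fm fm2 in measurable)
  finally show ?thesis using A B by linarith
qed

lemma aux_ineq:
  assumes "(p::real) > 0" "q = inverse p" "\<delta> < q * y" shows "\<delta> * p < y"
proof -
  have "\<delta> * p < (q * y) * p" using assms by (intro mult_strict_right_mono) auto
  also have "(q * y) * p = y" using assms by simp
  finally show ?thesis .
qed

lemma path_wt_split:
  assumes "p \<noteq> []"
  shows "path_wt wv we p = wv (hd p) * path_wt (\<lambda>u. 1) (\<lambda>u v. we u v * wv v) p"
proof -
  obtain m where m: "length p = Suc m" using assms by (cases p) auto
  have "(\<Prod>i<length p. wv (p ! i)) = wv (p!0) * (\<Prod>i<m. wv (p ! Suc i))"
    unfolding m by (simp only: prod.lessThan_Suc_shift)
  moreover have "hd p = p ! 0" using assms by (simp add: hd_conv_nth)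
  ultimately show ?thesis unfolding path_wt_def m by (simp add: prod.distrib mult_ac)
qed

lemma Zk_split:
  "Zk n wv we S T = (\<Prod>i<length S. wv (S!i)) * Zk n (\<lambda>u. 1) (\<lambda>u v. we u v * wv v) S T"
  unfolding Zk_def sum_distrib_left
    apply (rule sum.cong[OF refl])
    apply (rule sum.cong[OF refl])
    apply (simp add: prod.distrib[symmetric])
    apply (rule prod.cong[OF refl])
    apply (subst path_wt_split)
    by (auto simp: lattice_path_def)

theorem proposition3p2:
  fixes M :: "nat \<Rightarrow> 'a measure"
    and wv :: "nat \<Rightarrow> vtx \<Rightarrow> 'a \<Rightarrow> real"
    and we :: "nat \<Rightarrow> vtx \<Rightarrow> vtx \<Rightarrow> 'a \<Rightarrow> real"
    and t C \<delta> :: real and k :: nat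
    and S T :: "nat \<Rightarrow> vtx list"
  assumes P: "\<And>n. prob_space (M n)"
    and Wm: "\<And>n u. u \<in> lattice_vertices n \<Longrightarrow> wv n u \<in> borel_measurable (M n)"
    and "\<And>n u v. lattice_edge n u v \<Longrightarrow> we n u v \<in> borel_measurable (M n)"
    and Wae: "\<And>n u. u \<in> lattice_vertices n \<Longrightarrow> AE x in M n. wv n u x \<noteq> 0"
    and "\<And>n u v. lattice_edge n u v \<Longrightarrow> AE x in M n. we n u v x \<noteq> 0"
    and t: "t > 0"
    and Wi: "\<And>n u. u \<in> lattice_vertices n \<Longrightarrow>
           (\<integral>\<^sup>+ x. ennreal (exp (- t * ln \<bar>wv n u x\<bar>)) \<partial>M n) \<le> ennreal C \<and>
           (\<integral>\<^sup>+ x. ennreal (exp (t * ln \<bar>wv n u x\<bar>)) \<partial>M n) \<le> ennreal C"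
    and "\<And>n u v. lattice_edge n u v \<Longrightarrow>
           (\<integral>\<^sup>+ x. ennreal (exp (- t * ln \<bar>we n u v x\<bar>)) \<partial>M n) \<le> ennreal C \<and>
           (\<integral>\<^sup>+ x. ennreal (exp (t * ln \<bar>we n u v x\<bar>)) \<partial>M n) \<le> ennreal C"
    and k: "k \<ge> 1" and d: "\<delta> > 0"
    and ev: "\<forall>\<^sub>F n in sequentially.
           length (S n) = k \<and> length (T n) = k \<and> distinct (S n) \<and> distinct (T n) \<and>
           set (S n) \<subseteq> lattice_vertices n \<and> set (T n) \<subseteq> lattice_vertices n"
  shows "(\<lambda>n. measure (M n) {x \<in> space (M n).
            real n powr (-1/3) *
              \<bar>ln \<bar>Zk n (\<lambda>u. wv n u x) (\<lambda>u v. we n u v x) (S n) (T n)\<bar>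
               - ln \<bar>Zk n (\<lambda>u. 1) (\<lambda>u v. we n u v x * wv n v x) (S n) (T n)\<bar>\<bar> > \<delta>})
         \<longlonglongrightarrow> 0"
proof -
  define c where "c = t * \<delta> / real k"
  have c: "c > 0" using t d k by (simp add: c_def)
  define a where "a n = \<delta> * real n powr (1/3) / real k" for n :: nat
  define b where "b n = real k * (2 * exp (-t * a n) * max C 0)" for n :: nat
  have ta: "t * a n = c * real n powr (1/3)" for n by (simp add: a_def c_def)
  define g where "g n = real k * 2 * max C 0 / c * real n powr (-1/3)" for n :: nat
  have bg: "b n \<le> g n" if n: "n > 0" for n
  proof -
    have np: "real n powr (1/3) > 0" using n by simp
    define z where "z = c * real n powr (1/3)"
    have z: "z > 0" using c np by (simp add: z_def)
    have ee: "exp (- (t * a n)) = inverse (exp z)" using ta[of n] unfolding z_def by (simp add: exp_minus)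
    have ze: "z \<le> exp z" using exp_ge_add_one_self[of z] by linarith
    have "inverse (exp z) \<le> inverse z" using z ze by (intro le_imp_inverse_le) auto
    also have "inverse z = inverse c * real n powr (-1/3)"
      unfolding z_def by (simp add: powr_minus)
    finally have e: "exp (- (t * a n)) \<le> inverse c * real n powr (-1/3)" unfolding ee .
    have "b n = (real k * 2 * max C 0) * exp (- (t * a n))" by (simp add: b_def)
    also have "\<dots> \<le> (real k * 2 * max C 0) * (inverse c * real n powr (-1/3))"
      by (intro mult_left_mono e) auto
    also have "\<dots> = g n" by (simp only: g_def divide_inverse mult.assoc)
    finally show ?thesis .
  qed
  have gl: "g \<longlonglongrightarrow> 0"
  proof -
    have "(\<lambda>n. real k * 2 * max C 0 / c * real n powr (-1/3)) \<longlonglongrightarrow> real k * 2 * max C 0 / c * 0"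
      by (intro tendsto_intros tendsto_neg_powr filterlim_real_sequentially) auto
    thus ?thesis unfolding g_def[abs_def] by (simp only: mult_zero_right)
  qed
  have ev2: "\<forall>\<^sub>F n in sequentially. n > 0 \<and> length (S n) = k \<and> set (S n) \<subseteq> lattice_vertices n"
    using ev eventually_gt_at_top[of 0] by eventually_elim auto
  show ?thesis
  proof (rule Lim_null_comparison[OF _ gl])
    show "\<forall>\<^sub>F n in sequentially. norm (measure (M n) {x \<in> space (M n).
            real n powr (-1/3) *
              \<bar>ln \<bar>Zk n (\<lambda>u. wv n u x) (\<lambda>u v. we n u v x) (S n) (T n)\<bar>
               - ln \<bar>Zk n (\<lambda>u. 1) (\<lambda>u v. we n u v x * wv n v x) (S n) (T n)\<bar>\<bar> > \<delta>}) \<le> g n"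
      using ev2
    proof eventually_elim
      case (elim n)
      interpret prob_space "M n" by (rule P)
      define s where "s i = S n ! i" for i
      have sv: "i < k \<Longrightarrow> s i \<in> lattice_vertices n" for i
        using elim unfolding s_def by (metis nth_mem subsetD)
      have sm[measurable]: "i < k \<Longrightarrow> wv n (s i) \<in> borel_measurable (M n)" for i
        using Wm sv by blast
      define A where "A = {x \<in> space (M n).
            real n powr (-1/3) *
              \<bar>ln \<bar>Zk n (\<lambda>u. wv n u x) (\<lambda>u v. we n u v x) (S n) (T n)\<bar>
               - ln \<bar>Zk n (\<lambda>u. 1) (\<lambda>u v. we n u v x * wv n v x) (S n) (T n)\<bar>\<bar> > \<delta>}"
      define N where "N i = {x \<in> space (M n). wv n (s i) x = 0}" for i
      define B where "B i = {x \<in> space (M n). a n < \<bar>ln \<bar>wv n (s i) x\<bar>\<bar>}" for i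
      have Ns: "i < k \<Longrightarrow> N i \<in> sets (M n)" for i unfolding N_def by measurable
      have Bs: "i < k \<Longrightarrow> B i \<in> sets (M n)" for i unfolding B_def by measurable
      have N0: "i < k \<Longrightarrow> measure (M n) (N i) = 0" for i
      proof -
        assume i: "i < k"
        have "AE x in M n. wv n (s i) x \<noteq> 0" using Wae sv i by blast
        hence "emeasure (M n) (N i) = 0"
          by (subst (asm) AE_iff_measurable[OF Ns[OF i]]) (auto simp: N_def)
        thus ?thesis by (simp add: measure_def)
      qed
      have Bb: "i < k \<Longrightarrow> measure (M n) (B i) \<le> 2 * exp (-t * a n) * max C 0" for i
        unfolding B_def using tail[OF P sm t] Wi sv by blast
      have sub: "A \<subseteq> (\<Union>i<k. N i) \<union> (\<Union>i<k. B i)"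
      proof
        fix x assume xA: "x \<in> A"
        hence xs: "x \<in> space (M n)" by (simp add: A_def)
        show "x \<in> (\<Union>i<k. N i) \<union> (\<Union>i<k. B i)"
        proof (cases "\<exists>i<k. wv n (s i) x = 0")
          case True thus ?thesis using xs by (auto simp: N_def)
        next
          case False
          define Z' where "Z' = Zk n (\<lambda>u. 1) (\<lambda>u v. we n u v x * wv n v x) (S n) (T n)"
          define Pr where "Pr = (\<Prod>i<k. wv n (s i) x)"
          have Zeq: "Zk n (\<lambda>u. wv n u x) (\<lambda>u v. we n u v x) (S n) (T n) = Pr * Z'"
            unfolding Z'_def Pr_def s_def using Zk_split[of n "\<lambda>u. wv n u x" "\<lambda>u v. we n u v x" "S n" "T n"] elim
            by simp
          have Pr0: "Pr \<noteq> 0" using False by (simp add: Pr_def)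
          have gt: "real n powr (-1/3) * \<bar>ln \<bar>Pr * Z'\<bar> - ln \<bar>Z'\<bar>\<bar> > \<delta>"
            using xA unfolding A_def Z'_def by (simp add: Zeq[unfolded Z'_def])
          have Z0: "Z' \<noteq> 0" using gt d by auto
          have "ln \<bar>Pr * Z'\<bar> - ln \<bar>Z'\<bar> = ln \<bar>Pr\<bar>"
            using Pr0 Z0 by (simp add: abs_mult ln_mult)
          also have "ln \<bar>Pr\<bar> = (\<Sum>i<k. ln \<bar>wv n (s i) x\<bar>)"
            unfolding Pr_def abs_prod using False by (subst ln_prod) auto
          finally have gt2: "real n powr (-1/3) * \<bar>\<Sum>i<k. ln \<bar>wv n (s i) x\<bar>\<bar> > \<delta>" using gt by simp
          have np: "real n powr (1/3) > 0" using elim by simp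
          have "real n powr (-1/3) = inverse (real n powr (1/3))"
            by (simp add: powr_minus)
          with gt2 np have gt3: "\<bar>\<Sum>i<k. ln \<bar>wv n (s i) x\<bar>\<bar> > \<delta> * real n powr (1/3)"
            by (intro aux_ineq) auto
          have "\<exists>i<k. a n < \<bar>ln \<bar>wv n (s i) x\<bar>\<bar>"
          proof (rule ccontr)
            assume "\<not> ?thesis"
            hence "\<And>i. i \<in> {..<k} \<Longrightarrow> \<bar>ln \<bar>wv n (s i) x\<bar>\<bar> \<le> a n" by auto
            hence "(\<Sum>i<k. \<bar>ln \<bar>wv n (s i) x\<bar>\<bar>) \<le> (\<Sum>i<k. a n)" by (rule sum_mono)
            moreover have "\<bar>\<Sum>i<k. ln \<bar>wv n (s i) x\<bar>\<bar> \<le> (\<Sum>i<k. \<bar>ln \<bar>wv n (s i) x\<bar>\<bar>)"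
              by (rule sum_abs)
            moreover have "(\<Sum>i<k. a n) = \<delta> * real n powr (1/3)"
              using k by (simp add: a_def)
            ultimately show False using gt3 by linarith
          qed
          thus ?thesis using xs by (auto simp: B_def)
        qed
      qed
      have "measure (M n) A \<le> measure (M n) ((\<Union>i<k. N i) \<union> (\<Union>i<k. B i))"
        by (rule finite_measure_mono[OF sub]) (use Ns Bs in auto)
      also have "\<dots> \<le> measure (M n) (\<Union>i<k. N i) + measure (M n) (\<Union>i<k. B i)"
        by (rule measure_Un_le) (use Ns Bs in auto)
      also have "measure (M n) (\<Union>i<k. N i) \<le> (\<Sum>i<k. measure (M n) (N i))"
        by (rule measure_UNION_le) (use Ns in auto)
      also have "(\<Sum>i<k. measure (M n) (N i)) = 0" using N0 by simp
      also have "measure (M n) (\<Union>i<k. B i) \<le> (\<Sum>i<k. measure (M n) (B i))"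
        by (rule measure_UNION_le) (use Bs in auto)
      also have "\<dots> \<le> (\<Sum>i<k. 2 * exp (-t * a n) * max C 0)"
        by (rule sum_mono) (use Bb in auto)
      also have "\<dots> = b n" by (simp add: b_def)
      also have "\<dots> \<le> g n" using bg elim by blast
      finally show ?case unfolding A_def by simp
    qed
  qed
qed

end
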